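(* Let $V$ be a Lévy measure. Set $\mathcal{A}_{sym}=\emptyset$ if $V$ is symmetric and $\mathcal{A}_{sym}=\{1\}$ otherwise. Let $0<p\le q\le2$, $\mathcal{A}=\{p,q\}\cup\mathcal{A}_{sym}$, $p_{\min}=\min\mathcal{A}$, $p_{\max}=\max\mathcal{A}$, and assume $V\in\mathscr{M}(p_{\min},p_{\max})$. Let $g(\omega)=\int_{\mathbb{R}\setminus\{0\}}\left(\mathrm{e}^{\mathrm{j}\omega a}-1-\mathrm{j}\omega a\mathbb{1}_{|a|<1}\right)V(\mathrm{d}a)$. Then the functional $G(\varphi)=\int_{\mathbb{R}^d}g(\varphi(\mathbf{r}))\,\mathrm{d}\mathbf{r}$ is well defined on $L^{p_{\min}}(\mathbb{R}^d)\cap L^{p_{\max}}(\mathbb{R}^d)$ (i.e. $g\circ\varphi\in L^1$), and there exist $\kappa_1,\kappa_2\ge0$ such that for all $\varphi,\psi\in L^{p_{\min}}\cap L^{p_{\max}}$, $$|G(\varphi)-G(\psi)|\le\kappa_1H_{p_{\min}}(\varphi,\psi)+\kappa_2H_{p_{\max}}(\varphi,\psi),$$ where $H_r(\varphi,\psi)=\sqrt{(\|\varphi\|_r^r+\|\psi\|_r^r)\|\varphi-\psi\|_r^r}$ and $\|\varphi\|_r^r=\int_{\mathbb{R}^d}|\varphi|^r$.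
   Context: A Lévy measure is a Radon measure $V$ on $\mathbb{R}\setminus\{0\}$ with $\int\min(1,a^2)V(\mathrm{d}a)<\infty$; it is symmetric if $V(B)=V(-B)$ for all Borel $B$. $\mathscr{M}(p,q)$ is the set of Radon measures $V$ on $\mathbb{R}\setminus\{0\}$ with $\int_{0<|a|<1}|a|^qV(\mathrm{d}a)<\infty$ and $\int_{|a|\ge1}|a|^pV(\mathrm{d}a)<\infty$. Functions are real-valued. *)

theory Defs
  imports "HOL-Analysis.Analysis"
begin

text \<open>Measures on R minus 0 are modelled as Borel measures on the reals giving no mass to 0.\<close>

definition radon_punctured :: "real measure \<Rightarrow> bool" where
  "radon_punctured V \<longleftrightarrow> sets V = sets borel \<and> emeasure V {0} = 0 \<and>
     (\<forall>K. compact K \<and> K \<subseteq> - {0} \<longrightarrow> emeasure V K < \<infinity>)"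

definition levy_measure :: "real measure \<Rightarrow> bool" where
  "levy_measure V \<longleftrightarrow> radon_punctured V \<and>
     (\<integral>\<^sup>+ a. ennreal (min 1 (a\<^sup>2)) \<partial>V) < \<infinity>"

definition symmetric_measure :: "real measure \<Rightarrow> bool" where
  "symmetric_measure V \<longleftrightarrow> (\<forall>B \<in> sets borel. emeasure V B = emeasure V (uminus ` B))"

definition M_class :: "real \<Rightarrow> real \<Rightarrow> real measure set" where
  "M_class p q = {V. radon_punctured V \<and>
     (\<integral>\<^sup>+ a. ennreal (indicator {a. 0 < \<bar>a\<bar> \<and> \<bar>a\<bar> < 1} a * \<bar>a\<bar> powr q) \<partial>V) < \<infinity> \<and>
     (\<integral>\<^sup>+ a. ennreal (indicator {a. 1 \<le> \<bar>a\<bar>} a * \<bar>a\<bar> powr p) \<partial>V) < \<infinity>}"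

definition levy_exponent :: "real measure \<Rightarrow> real \<Rightarrow> complex" where
  "levy_exponent V \<omega> = (LINT a|V. cis (\<omega> * a) - 1
      - \<i> * complex_of_real (\<omega> * a * indicator {a. \<bar>a\<bar> < 1} a))"

definition Lp_space :: "real \<Rightarrow> ('a::euclidean_space \<Rightarrow> real) set" where
  "Lp_space r = {f. f \<in> borel_measurable lebesgue \<and> integrable lebesgue (\<lambda>x. \<bar>f x\<bar> powr r)}"

definition Lp_norm_pow :: "real \<Rightarrow> ('a::euclidean_space \<Rightarrow> real) \<Rightarrow> real" where
  "Lp_norm_pow r f = (LINT x|lebesgue. \<bar>f x\<bar> powr r)"

definition H_dist :: "real \<Rightarrow> ('a::euclidean_space \<Rightarrow> real) \<Rightarrow> ('a \<Rightarrow> real) \<Rightarrow> real" where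
  "H_dist r \<phi> \<psi> = sqrt ((Lp_norm_pow r \<phi> + Lp_norm_pow r \<psi>) * Lp_norm_pow r (\<lambda>x. \<phi> x - \<psi> x))"

definition G_functional :: "real measure \<Rightarrow> ('a::euclidean_space \<Rightarrow> real) \<Rightarrow> complex" where
  "G_functional V \<phi> = (LINT x|lebesgue. levy_exponent V (\<phi> x))"

end

theory Submission
  imports Defs "HOL-Probability.Characteristic_Functions"
begin

lemma cis1: "cmod (cis t - 1) \<le> 2" "cmod (cis t - 1) \<le> \<bar>t\<bar>"
  using iexp_approx1[of t 0] iexp_approx2[of t 0] by (simp_all add: cis_conv_exp)
lemma cis2: "cmod (cis t - 1 - \<i> * t) \<le> t^2/2" "cmod (cis t - 1 - \<i> * t) \<le> 2*\<bar>t\<bar>"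
  using iexp_approx1[of t 1] iexp_approx2[of t 1] by (simp_all add: cis_conv_exp diff_diff_eq power2_eq_square)

lemma min_powr: fixes s b :: real assumes "0 \<le> s" "0 < b" "b \<le> 1" shows "min 1 s \<le> s powr b"
proof (cases "s \<le> 1")
  case True
  then show ?thesis using assms
  proof -
    have "s powr 1 \<le> s powr b" using True assms powr_mono'[of b 1 s] by auto
    then show ?thesis using True assms by simp
  qed
next
  case False
  then show ?thesis using assms by (simp add: ge_one_powr_ge_zero)
qed

lemma half_split: fixes s t r :: real assumes "0 \<le> s" "s \<le> t" "0 < r" "r \<le> 2"
  shows "s powr r \<le> t powr (r/2) * s powr (r/2)"
proof -
  have "s powr r = s powr (r/2 + r/2)" by simp
  also have "\<dots> = s powr (r/2) * s powr (r/2)" by (rule powr_add)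
  also have "\<dots> \<le> t powr (r/2) * s powr (r/2)"
    using assms by (intro mult_right_mono powr_mono2) auto
  finally show ?thesis .
qed

lemma cis_diff: "cmod (cis u - cis v) \<le> 2" "cmod (cis u - cis v) \<le> \<bar>u - v\<bar>"
proof -
  have e: "cis u - cis v = cis v * (cis (u - v) - 1)" by (simp add: algebra_simps cis_mult)
  show "cmod (cis u - cis v) \<le> 2" "cmod (cis u - cis v) \<le> \<bar>u - v\<bar>"
    unfolding e norm_mult using cis1[of "u-v"] by simp_all
qed
lemma min_powr0: fixes s b :: real assumes "0 < s" "0 \<le> b" "b \<le> 1" shows "min 1 s \<le> s powr b"
  using min_powr[of s b] assms by (cases "b = 0") auto

lemma abs_sin_min: fixes z :: real shows "\<bar>sin z\<bar> \<le> min 1 \<bar>z\<bar>"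
  using abs_sin_le_one[of z] abs_sin_x_le_abs_x[of z] by simp

lemma cos_core: fixes s t b r :: real
  assumes "0 \<le> s" "s \<le> t" "0 \<le> b" "0 < r" "r \<le> 2"
    and "\<bar>u + v\<bar> \<le> 2 * (t * b)" "\<bar>u - v\<bar> \<le> 2 * (s * b)"
  shows "\<bar>cos u - cos v\<bar> \<le> 2 * (b powr r * (t powr (r/2) * s powr (r/2)))"
proof -
  have "\<bar>cos u - cos v\<bar> = 2 * (\<bar>sin ((u + v) / 2)\<bar> * \<bar>sin ((v - u) / 2)\<bar>)"
    by (simp add: cos_diff_cos abs_mult)
  also have "\<dots> \<le> 2 * (min 1 (t*b) * min 1 (s*b))"
  proof -
    have "\<bar>sin ((u + v) / 2)\<bar> \<le> min 1 (t*b)" using abs_sin_min[of "(u+v)/2"] assms(6) by auto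
    moreover have "\<bar>sin ((v - u) / 2)\<bar> \<le> min 1 (s*b)" using abs_sin_min[of "(v-u)/2"] assms(7) by auto
    ultimately show ?thesis by (intro mult_left_mono mult_mono) auto
  qed
  also have "\<dots> \<le> 2 * ((t*b) powr (r/2) * (s*b) powr (r/2))"
    using assms min_powr[of "t*b" "r/2"] min_powr[of "s*b" "r/2"]
    by (intro mult_left_mono mult_mono) auto
  also have "(t*b) powr (r/2) * (s*b) powr (r/2) = (b powr (r/2) * b powr (r/2)) * (t powr (r/2) * s powr (r/2))"
    by (simp add: powr_mult)
  also have "b powr (r/2) * b powr (r/2) = b powr r" by (simp flip: powr_add)
  finally show ?thesis .
qed

lemma large_core: fixes s t b r :: real
  assumes "0 \<le> s" "s \<le> t" "0 \<le> b" "0 < r" "r \<le> 1" and that: "\<bar>u - v\<bar> \<le> s * b"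
  shows "cmod (cis u - cis v) \<le> 2 * (b powr r * (t powr (r/2) * s powr (r/2)))"
proof -
  have "cmod (cis u - cis v) \<le> 2 * min 1 (s*b)" using cis_diff[of u v] that by auto
  also have "\<dots> \<le> 2 * (s*b) powr r" using min_powr[of "s*b" r] assms by auto
  also have "(s*b) powr r = b powr r * s powr r" by (simp add: powr_mult)
  also have "\<dots> \<le> b powr r * (t powr (r/2) * s powr (r/2))"
    using half_split[of s t r] assms by (intro mult_left_mono) auto
  finally show ?thesis by simp
qed

lemma small_core: fixes s t b r :: real
  assumes "0 \<le> s" "s \<le> t" "0 \<le> b" "1 \<le> r" "r \<le> 2"
  shows "s * b * min 1 (t * b) \<le> b powr r * (t powr (r/2) * s powr (r/2))"
proof (cases "s = 0 \<or> b = 0")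
  case True then show ?thesis by auto
next
  case False
  then have s: "s > 0" and b: "b > 0" and t: "t > 0" using assms by auto
  have "s * b * min 1 (t * b) \<le> s * b * (t*b) powr (r - 1)"
    using min_powr0[of "t*b" "r-1"] s b t assms by (intro mult_left_mono) auto
  also have "\<dots> = (b powr 1 * b powr (r-1)) * (s * t powr (r-1))"
    using b by (simp add: powr_mult)
  also have "b powr 1 * b powr (r-1) = b powr r" using powr_add[of b 1 "r-1"] by simp
  also have "s * t powr (r-1) = s powr (r/2) * s powr (1 - r/2) * t powr (r-1)"
    using s by (simp flip: powr_add)
  also have "\<dots> \<le> s powr (r/2) * t powr (1 - r/2) * t powr (r-1)"
    using s assms by (intro mult_right_mono mult_left_mono powr_mono2) auto
  also have "s powr (r/2) * t powr (1 - r/2) * t powr (r-1) = t powr (r/2) * s powr (r/2)"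
  proof -
    have "t powr (1 - r/2) * t powr (r-1) = t powr (r/2)" by (simp flip: powr_add)
    then show ?thesis by (simp add: mult.assoc mult.commute)
  qed
  finally show ?thesis using b by (simp add: mult_left_mono)
qed
definition kfun :: "real \<Rightarrow> real \<Rightarrow> complex" where
  "kfun x a = cis (x * a) - 1 - \<i> * complex_of_real (x * a * indicator {a. \<bar>a\<bar> < 1} a)"

definition mm :: "real \<Rightarrow> real \<Rightarrow> real \<Rightarrow> real" where
  "mm r x y = (\<bar>x\<bar> + \<bar>y\<bar>) powr (r/2) * \<bar>x - y\<bar> powr (r/2)"

lemma k_int_bound: fixes r1 r2 x a :: real
  assumes "0 < r1" "r1 \<le> r2" "r2 \<le> 2"
  shows "cmod (kfun x a) \<le> (x^2 + 2) * (indicator {a. \<bar>a\<bar> < 1} a * \<bar>a\<bar> powr r2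
            + indicator {a. 1 \<le> \<bar>a\<bar>} a * \<bar>a\<bar> powr r1)"
proof (cases "\<bar>a\<bar> < 1")
  case True
  then have "kfun x a = cis (x*a) - 1 - \<i> * (x*a)" by (simp add: kfun_def)
  then have "cmod (kfun x a) \<le> (x*a)^2/2" using cis2(1)[of "x*a"] by simp
  also have "\<dots> \<le> x^2 * \<bar>a\<bar> powr 2" by (simp add: power_mult_distrib)
  also have "\<dots> \<le> x^2 * \<bar>a\<bar> powr r2"
    using True assms powr_mono'[of r2 2 "\<bar>a\<bar>"] by (intro mult_left_mono) auto
  also have "\<dots> \<le> (x^2 + 2) * \<bar>a\<bar> powr r2" by (intro mult_right_mono) auto
  finally show ?thesis using True by simp
next
  case False
  then have "kfun x a = cis (x*a) - 1" by (simp add: kfun_def)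
  then have "cmod (kfun x a) \<le> 2" using cis1(1)[of "x*a"] by simp
  also have "\<dots> \<le> (x^2 + 2) * \<bar>a\<bar> powr r1"
  proof -
    have "1 \<le> \<bar>a\<bar> powr r1" using False assms ge_one_powr_ge_zero by auto
    then have "2 \<le> 2 * \<bar>a\<bar> powr r1" by simp
    also have "\<dots> \<le> (x^2 + 2) * \<bar>a\<bar> powr r1" by (intro mult_right_mono) auto
    finally show ?thesis .
  qed
  finally show ?thesis using False by simp
qed

lemma k_diff_nonsym: fixes r1 r2 x y a :: real
  assumes "0 < r1" "r1 \<le> 1" "1 \<le> r2" "r2 \<le> 2"
  shows "cmod (kfun x a - kfun y a) \<le> 4 * (indicator {a. \<bar>a\<bar> < 1} a * \<bar>a\<bar> powr r2 * mm r2 x y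
            + indicator {a. 1 \<le> \<bar>a\<bar>} a * \<bar>a\<bar> powr r1 * mm r1 x y)"
proof -
  define s where "s = \<bar>x - y\<bar>"
  define t where "t = \<bar>x\<bar> + \<bar>y\<bar>"
  define b where "b = \<bar>a\<bar>"
  have st: "0 \<le> s" "s \<le> t" "0 \<le> b" unfolding s_def t_def b_def by auto
  have mm: "mm r x y = t powr (r/2) * s powr (r/2)" for r unfolding mm_def s_def t_def by simp
  show ?thesis
  proof (cases "\<bar>a\<bar> < 1")
    case True
    define u where "u = x * a"
    define v where "v = y * a"
    define w where "w = u - v"
    have "kfun x a - kfun y a = cis u - cis v - \<i> * w"
      using True by (simp add: kfun_def u_def v_def w_def algebra_simps)
    also have "\<dots> = cis v * (cis w - 1 - \<i> * w) + \<i> * w * (cis v - 1)"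
      by (simp add: w_def algebra_simps cis_mult)
    finally have e: "kfun x a - kfun y a = cis v * (cis w - 1 - \<i> * w) + \<i> * w * (cis v - 1)" .
    have w: "\<bar>w\<bar> = s * b" unfolding w_def u_def v_def s_def b_def by (simp add: abs_mult left_diff_distrib[symmetric])
    have wt: "\<bar>w\<bar> \<le> t * b" using w st by (simp add: mult_right_mono)
    have vt: "\<bar>v\<bar> \<le> t * b" unfolding v_def t_def b_def by (simp add: abs_mult mult_right_mono)
    have c1: "cmod (cis w - 1 - \<i> * w) \<le> 2 * \<bar>w\<bar> * min 1 \<bar>w\<bar>"
    proof (cases "\<bar>w\<bar> \<le> 1")
      case True
      then have "w^2/2 \<le> 2 * \<bar>w\<bar> * \<bar>w\<bar>" by (simp add: power2_eq_square abs_mult_self_eq)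
      then show ?thesis using cis2(1)[of w] True by simp
    next
      case False
      then show ?thesis using cis2(2)[of w] by simp
    qed
    have c2: "cmod (cis v - 1) \<le> 2 * min 1 \<bar>v\<bar>" using cis1[of v] by simp
    have "cmod (kfun x a - kfun y a) \<le> cmod (cis w - 1 - \<i> * w) + \<bar>w\<bar> * cmod (cis v - 1)"
      unfolding e by (rule order.trans[OF norm_triangle_ineq]) (simp add: norm_mult)
    also have "\<dots> \<le> 2 * \<bar>w\<bar> * min 1 \<bar>w\<bar> + \<bar>w\<bar> * (2 * min 1 \<bar>v\<bar>)"
      using c1 c2 by (intro add_mono mult_left_mono) auto
    also have "\<dots> \<le> 2 * \<bar>w\<bar> * min 1 (t*b) + \<bar>w\<bar> * (2 * min 1 (t*b))"
      using wt vt by (intro add_mono mult_left_mono) auto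
    also have "\<dots> = 4 * (s * b * min 1 (t * b))" using w by simp
    also have "\<dots> \<le> 4 * (b powr r2 * (t powr (r2/2) * s powr (r2/2)))"
      using small_core[of s t b r2] st assms by simp
    finally show ?thesis using True by (simp add: mm b_def mult.assoc)
  next
    case False
    have "kfun x a - kfun y a = cis (x*a) - cis (y*a)" using False by (simp add: kfun_def)
    moreover have "\<bar>x*a - y*a\<bar> \<le> s * b" unfolding s_def b_def by (simp add: abs_mult left_diff_distrib[symmetric])
    ultimately have "cmod (kfun x a - kfun y a) \<le> 2 * (b powr r1 * (t powr (r1/2) * s powr (r1/2)))"
      using large_core[of s t b r1 "x*a" "y*a"] st assms by simp
    moreover have "0 \<le> b powr r1 * (t powr (r1/2) * s powr (r1/2))" by simp
    ultimately have "cmod (kfun x a - kfun y a) \<le> 4 * (b powr r1 * (t powr (r1/2) * s powr (r1/2)))" by linarith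
    then show ?thesis using False by (simp add: mm b_def mult.assoc)
  qed
qed

lemma cos_diff_sym: fixes r1 r2 x y a :: real
  assumes "0 < r1" "r1 \<le> r2" "r2 \<le> 2"
  shows "\<bar>cos (x*a) - cos (y*a)\<bar> \<le> 4 * (indicator {a. \<bar>a\<bar> < 1} a * \<bar>a\<bar> powr r2 * mm r2 x y
            + indicator {a. 1 \<le> \<bar>a\<bar>} a * \<bar>a\<bar> powr r1 * mm r1 x y)"
proof -
  define s where "s = \<bar>x - y\<bar>"
  define t where "t = \<bar>x\<bar> + \<bar>y\<bar>"
  define b where "b = \<bar>a\<bar>"
  have st: "0 \<le> s" "s \<le> t" "0 \<le> b" unfolding s_def t_def b_def by auto
  have mm: "mm r x y = t powr (r/2) * s powr (r/2)" for r unfolding mm_def s_def t_def by simp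
  have h1: "\<bar>x*a + y*a\<bar> \<le> 2 * (t * b)"
  proof -
    have "\<bar>x*a + y*a\<bar> = \<bar>x+y\<bar> * b" unfolding b_def by (simp add: abs_mult distrib_right[symmetric])
    also have "\<dots> \<le> t * b" unfolding t_def b_def by (intro mult_right_mono abs_triangle_ineq) auto
    moreover have "0 \<le> t * b" using st by simp
    ultimately show ?thesis by linarith
  qed
  have h2: "\<bar>x*a - y*a\<bar> \<le> 2 * (s * b)" unfolding s_def b_def by (simp add: abs_mult left_diff_distrib[symmetric])
  have "\<bar>cos (x*a) - cos (y*a)\<bar> \<le> 4 * (b powr r * (t powr (r/2) * s powr (r/2)))" if "0 < r" "r \<le> 2" for r
  proof -
    have "\<bar>cos (x*a) - cos (y*a)\<bar> \<le> 2 * (b powr r * (t powr (r/2) * s powr (r/2)))"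
      using cos_core[OF st(1,2,3) that h1 h2] .
    moreover have "0 \<le> b powr r * (t powr (r/2) * s powr (r/2))" by simp
    ultimately show ?thesis by linarith
  qed
  from this[of r2] this[of r1] show ?thesis using assms by (cases "\<bar>a\<bar> < 1") (auto simp: mm b_def mult.assoc)
qed


lemma sym_distr: fixes V :: "real measure"
  assumes sym: "\<forall>B \<in> sets borel. emeasure V B = emeasure V (uminus ` B)" and sV: "sets V = sets borel"
  shows "distr V borel uminus = V"
proof -
  have m: "uminus \<in> measurable V borel" using sV by (simp add: measurable_cong_sets[OF sV refl])
  have sp: "space V = UNIV" using sets_eq_imp_space_eq[OF sV] by simp
  show ?thesis
  proof (rule measure_eqI)
    show "sets (distr V borel uminus) = sets V" using sV by simp
    fix A assume "A \<in> sets (distr V borel uminus)"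
    then have A: "A \<in> sets borel" by simp
    have "uminus -` A \<inter> space V = uminus ` A" unfolding sp
    proof (intro set_eqI iffI)
      fix x :: real assume "x \<in> uminus -` A \<inter> UNIV"
      then have "- x \<in> A" by simp
      then show "x \<in> uminus ` A" by (rule rev_image_eqI) simp
    next
      fix x :: real assume "x \<in> uminus ` A"
      then show "x \<in> uminus -` A \<inter> UNIV" by auto
    qed
    then show "emeasure (distr V borel uminus) A = emeasure V A"
      using emeasure_distr[OF m A] sym A by simp
  qed
qed

lemma sym_integral: fixes V :: "real measure" and f :: "real \<Rightarrow> 'b::{banach, second_countable_topology}"
  assumes sym: "\<forall>B \<in> sets borel. emeasure V B = emeasure V (uminus ` B)" and sV: "sets V = sets borel"
    and f: "f \<in> borel_measurable borel"
  shows "(LINT a|V. f (- a)) = (LINT a|V. f a)"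
proof -
  have m: "uminus \<in> measurable V borel" using sV by (simp add: measurable_cong_sets[OF sV refl])
  have "(LINT a|V. f a) = integral\<^sup>L (distr V borel uminus) f" using sym_distr[OF sym sV] by simp
  also have "\<dots> = (LINT a|V. f (- a))" by (rule integral_distr[OF m f])
  finally show ?thesis by simp
qed

lemma kfun_meas: "kfun x \<in> borel_measurable borel"
proof -
  have S: "{a::real. \<bar>a\<bar> < 1} \<in> sets borel" by (intro borel_open open_Collect_less continuous_intros)
  have c: "(\<lambda>a. cis (x * a) - 1) \<in> borel_measurable borel"
    by (intro borel_measurable_continuous_onI continuous_intros)
  have i: "(\<lambda>a. \<i> * complex_of_real (x * a * indicator {a. \<bar>a\<bar> < 1} a)) \<in> borel_measurable borel"
    using S by measurable
  show ?thesis unfolding kfun_def using borel_measurable_diff[OF c i] by simp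
qed

lemma kfun_sym: "kfun x a + kfun x (- a) = complex_of_real (2 * (cos (x * a) - 1))"
  by (simp add: kfun_def complex_eq_iff indicator_def cis.sel)

locale gsetup =
  fixes V :: "real measure" and r1 r2 :: real
  assumes sV: "sets V = sets borel"
   and i2: "integrable V (\<lambda>a. indicator {a. \<bar>a\<bar> < 1} a * \<bar>a\<bar> powr r2)"
   and i1: "integrable V (\<lambda>a. indicator {a. 1 \<le> \<bar>a\<bar>} a * \<bar>a\<bar> powr r1)"
   and r: "0 < r1" "r1 \<le> r2" "r2 \<le> 2"
   and cs: "(\<forall>B \<in> sets borel. emeasure V B = emeasure V (uminus ` B)) \<or> (r1 \<le> 1 \<and> 1 \<le> r2)"
begin

definition "W1 = (LINT a|V. indicator {a. 1 \<le> \<bar>a\<bar>} a * \<bar>a\<bar> powr r1)"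
definition "W2 = (LINT a|V. indicator {a. \<bar>a\<bar> < 1} a * \<bar>a\<bar> powr r2)"

lemma W_nonneg: "0 \<le> W1" "0 \<le> W2"
  unfolding W1_def W2_def by (auto intro!: integral_nonneg_AE)

lemma bmeas: "f \<in> borel_measurable borel \<Longrightarrow> f \<in> borel_measurable V"
  by (subst measurable_cong_sets[OF sV refl])

lemma kint: "integrable V (kfun x)" "integrable V (\<lambda>a. kfun x (- a))"
proof -
  have I: "integrable V (\<lambda>a. (x^2 + 2) * (indicator {a. \<bar>a\<bar> < 1} a * \<bar>a\<bar> powr r2
            + indicator {a. 1 \<le> \<bar>a\<bar>} a * \<bar>a\<bar> powr r1))"
    by (rule Bochner_Integration.integrable_mult_right, rule Bochner_Integration.integrable_add[OF i2 i1])
  have m1: "kfun x \<in> borel_measurable V" by (rule bmeas[OF kfun_meas])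
  have m2: "(\<lambda>a. kfun x (- a)) \<in> borel_measurable V"
    by (rule bmeas) (rule measurable_compose[OF _ kfun_meas], simp)
  have b1: "norm (kfun x a) \<le> norm ((x^2 + 2) * (indicator {a. \<bar>a\<bar> < 1} a * \<bar>a\<bar> powr r2
            + indicator {a. 1 \<le> \<bar>a\<bar>} a * \<bar>a\<bar> powr r1))" for a
    unfolding real_norm_def by (rule order.trans[OF k_int_bound[OF r] abs_ge_self])
  have b2: "norm (kfun x (- a)) \<le> norm ((x^2 + 2) * (indicator {a. \<bar>a\<bar> < 1} a * \<bar>a\<bar> powr r2
            + indicator {a. 1 \<le> \<bar>a\<bar>} a * \<bar>a\<bar> powr r1))" for a
  proof -
    have e: "indicator {a. \<bar>a\<bar> < 1} (- a) = (indicator {a. \<bar>a\<bar> < 1} a :: real)"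
       "indicator {a. 1 \<le> \<bar>a\<bar>} (- a) = (indicator {a. 1 \<le> \<bar>a\<bar>} a :: real)"
      by (simp_all add: indicator_def)
    show ?thesis using k_int_bound[OF r, of x "- a"] unfolding real_norm_def e abs_minus_cancel
      by (rule order.trans) (rule abs_ge_self)
  qed
  show "integrable V (kfun x)"
    by (rule Bochner_Integration.integrable_bound[OF I m1]) (rule AE_I2, rule b1)
  show "integrable V (\<lambda>a. kfun x (- a))"
    by (rule Bochner_Integration.integrable_bound[OF I m2]) (rule AE_I2, rule b2)
qed

lemma g_eq: "levy_exponent V x = (LINT a|V. kfun x a)"
  by (simp add: levy_exponent_def kfun_def)

lemma g0: "levy_exponent V 0 = 0"
  by (simp add: g_eq kfun_def)

lemma Bint: "integrable V (\<lambda>a. 4 * (indicator {a. \<bar>a\<bar> < 1} a * \<bar>a\<bar> powr r2 * c2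
            + indicator {a. 1 \<le> \<bar>a\<bar>} a * \<bar>a\<bar> powr r1 * c1))"
  by (rule Bochner_Integration.integrable_mult_right, rule Bochner_Integration.integrable_add; rule Bochner_Integration.integrable_mult_left; rule i1 i2)

lemma Bintegral: "(LINT a|V. 4 * (indicator {a. \<bar>a\<bar> < 1} a * \<bar>a\<bar> powr r2 * c2
            + indicator {a. 1 \<le> \<bar>a\<bar>} a * \<bar>a\<bar> powr r1 * c1)) = 4 * (W2 * c2 + W1 * c1)"
proof -
  have "(LINT a|V. indicator {a. \<bar>a\<bar> < 1} a * \<bar>a\<bar> powr r2 * c2
            + indicator {a. 1 \<le> \<bar>a\<bar>} a * \<bar>a\<bar> powr r1 * c1) =
        (LINT a|V. indicator {a. \<bar>a\<bar> < 1} a * \<bar>a\<bar> powr r2 * c2) +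
        (LINT a|V. indicator {a. 1 \<le> \<bar>a\<bar>} a * \<bar>a\<bar> powr r1 * c1)"
    by (rule Bochner_Integration.integral_add; rule Bochner_Integration.integrable_mult_left; rule i1 i2)
  then show ?thesis unfolding W1_def W2_def by (simp only: integral_mult_right_zero integral_mult_left_zero)
qed

lemma gdiff: "cmod (levy_exponent V x - levy_exponent V y) \<le> 4 * (W2 * mm r2 x y + W1 * mm r1 x y)"
proof (cases "r1 \<le> 1 \<and> 1 \<le> r2")
  case True
  have "levy_exponent V x - levy_exponent V y = (LINT a|V. kfun x a - kfun y a)"
    using kint by (simp add: g_eq)
  note e = this
  have b: "cmod (LINT a|V. kfun x a - kfun y a) \<le> (LINT a|V. 4 * (indicator {a. \<bar>a\<bar> < 1} a * \<bar>a\<bar> powr r2 * mm r2 x y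
            + indicator {a. 1 \<le> \<bar>a\<bar>} a * \<bar>a\<bar> powr r1 * mm r1 x y))"
  proof (rule Bochner_Integration.integral_norm_bound_integral)
    show "integrable V (\<lambda>a. kfun x a - kfun y a)"
      by (rule Bochner_Integration.integrable_diff; rule kint)
    show "integrable V (\<lambda>a. 4 * (indicator {a. \<bar>a\<bar> < 1} a * \<bar>a\<bar> powr r2 * mm r2 x y
            + indicator {a. 1 \<le> \<bar>a\<bar>} a * \<bar>a\<bar> powr r1 * mm r1 x y))" by (rule Bint)
    fix a show "norm (kfun x a - kfun y a) \<le> 4 * (indicator {a. \<bar>a\<bar> < 1} a * \<bar>a\<bar> powr r2 * mm r2 x y
            + indicator {a. 1 \<le> \<bar>a\<bar>} a * \<bar>a\<bar> powr r1 * mm r1 x y)"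
      using True by (intro k_diff_nonsym[OF r(1) _ _ r(3)]) auto
  qed
  show ?thesis using b unfolding e[symmetric] Bintegral .
next
  case False
  then have sym: "\<forall>B \<in> sets borel. emeasure V B = emeasure V (uminus ` B)" using cs by auto
  have cint: "integrable V (\<lambda>a. complex_of_real (cos (x * a) - 1))"
    and ceq: "levy_exponent V x = (LINT a|V. complex_of_real (cos (x * a) - 1))" for x
  proof -
    have "integrable V (\<lambda>a. (kfun x a + kfun x (- a)) / 2)"
      using kint by (intro integrable_divide Bochner_Integration.integrable_add)
    moreover have "(\<lambda>a. (kfun x a + kfun x (- a)) / 2) = (\<lambda>a. complex_of_real (cos (x * a) - 1))"
      by (rule ext) (simp only: kfun_sym of_real_mult of_real_numeral, simp)
    ultimately show "integrable V (\<lambda>a. complex_of_real (cos (x * a) - 1))" by simp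
    have "2 * levy_exponent V x = (LINT a|V. kfun x a) + (LINT a|V. kfun x (- a))"
      using sym_integral[OF sym sV kfun_meas] by (simp add: g_eq)
    also have "\<dots> = (LINT a|V. kfun x a + kfun x (- a))" using kint by simp
    also have "\<dots> = 2 * (LINT a|V. complex_of_real (cos (x * a) - 1))"
      by (simp only: kfun_sym of_real_mult of_real_numeral integral_mult_right_zero)
    finally show "levy_exponent V x = (LINT a|V. complex_of_real (cos (x * a) - 1))" by simp
  qed
  have "levy_exponent V x - levy_exponent V y = (LINT a|V. complex_of_real (cos (x * a) - cos (y * a)))"
  proof -
    have eq: "(\<lambda>a. complex_of_real (cos (x * a) - cos (y * a))) =
        (\<lambda>a. complex_of_real (cos (x * a) - 1) - complex_of_real (cos (y * a) - 1))"
      by (rule ext) simp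
    show ?thesis unfolding eq Bochner_Integration.integral_diff[OF cint cint] ceq[symmetric] ..
  qed
  note e = this
  have b: "cmod (LINT a|V. complex_of_real (cos (x * a) - cos (y * a))) \<le> (LINT a|V. 4 * (indicator {a. \<bar>a\<bar> < 1} a * \<bar>a\<bar> powr r2 * mm r2 x y
            + indicator {a. 1 \<le> \<bar>a\<bar>} a * \<bar>a\<bar> powr r1 * mm r1 x y))"
  proof (intro Bochner_Integration.integral_norm_bound_integral Bint)
    show "integrable V (\<lambda>a. complex_of_real (cos (x * a) - cos (y * a)))"
      using Bochner_Integration.integrable_diff[OF cint[of x] cint[of y]] by simp
    fix a show "norm (complex_of_real (cos (x * a) - cos (y * a))) \<le> 4 * (indicator {a. \<bar>a\<bar> < 1} a * \<bar>a\<bar> powr r2 * mm r2 x y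
            + indicator {a. 1 \<le> \<bar>a\<bar>} a * \<bar>a\<bar> powr r1 * mm r1 x y)"
      unfolding norm_of_real by (rule cos_diff_sym[OF r])
  qed
  show ?thesis using b unfolding e[symmetric] Bintegral .
qed


lemma gcont: "continuous_on UNIV (levy_exponent V)"
proof (rule continuous_at_imp_continuous_on, intro ballI)
  fix x :: real
  define b where "b y = 4 * (W2 * mm r2 y x + W1 * mm r1 y x)" for y
  have cb: "continuous_on UNIV b" unfolding b_def mm_def
    using r by (intro continuous_intros continuous_on_powr') auto
  then have "(b \<longlongrightarrow> b x) (at x)"
    by (simp add: continuous_on_eq_continuous_at isCont_def)
  moreover have "b x = 0" by (simp add: b_def mm_def)
  ultimately have "(b \<longlongrightarrow> 0) (at x)" by simp
  moreover have ev: "\<forall>y. norm (levy_exponent V y - levy_exponent V x) \<le> b y"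
    unfolding b_def by (intro allI, rule gdiff)
  ultimately have "((\<lambda>y. levy_exponent V y - levy_exponent V x) \<longlongrightarrow> 0) (at x)"
    by (intro Lim_null_comparison[OF always_eventually[OF ev]])
  from tendsto_add[OF this tendsto_const[of "levy_exponent V x"]]
  show "isCont (levy_exponent V) x" by (simp add: isCont_def)
qed

lemma mm_zero: "mm r z 0 = \<bar>z\<bar> powr r"
proof -
  have "mm r z 0 = \<bar>z\<bar> powr (r/2 + r/2)" unfolding mm_def by (simp only: powr_add) simp
  then show ?thesis by simp
qed

lemma gbound: "cmod (levy_exponent V z) \<le> 4 * (W2 * \<bar>z\<bar> powr r2 + W1 * \<bar>z\<bar> powr r1)"
  using gdiff[of z 0] by (simp add: g0 mm_zero)

end

lemma mm_le: fixes r a b :: real assumes "0 < r" "r \<le> 2"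
  shows "mm r a b \<le> 4 * (\<bar>a\<bar> powr r + \<bar>b\<bar> powr r)" "\<bar>a - b\<bar> powr r \<le> 4 * (\<bar>a\<bar> powr r + \<bar>b\<bar> powr r)"
proof -
  define T where "T = \<bar>a\<bar> + \<bar>b\<bar>"
  define M where "M = max \<bar>a\<bar> \<bar>b\<bar>"
  have "T powr r \<le> (2 * M) powr r" unfolding T_def M_def using assms by (intro powr_mono2) auto
  also have "\<dots> = 2 powr r * M powr r" by (simp add: powr_mult M_def)
  also have "\<dots> \<le> 4 * M powr r"
  proof -
    have "2 powr r \<le> 2 powr (2::real)" using assms by (intro powr_mono) auto
    then show ?thesis by (intro mult_right_mono) auto
  qed
  also have "M powr r \<le> \<bar>a\<bar> powr r + \<bar>b\<bar> powr r" unfolding M_def by (auto simp: max_def)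
  finally have T: "T powr r \<le> 4 * (\<bar>a\<bar> powr r + \<bar>b\<bar> powr r)" by simp
  have "mm r a b \<le> T powr (r/2) * T powr (r/2)" unfolding mm_def T_def
    using assms by (intro mult_left_mono powr_mono2) (auto simp: abs_triangle_ineq4)
  also have "\<dots> = T powr r" by (simp flip: powr_add)
  finally show "mm r a b \<le> 4 * (\<bar>a\<bar> powr r + \<bar>b\<bar> powr r)" using T by simp
  have "\<bar>a - b\<bar> powr r \<le> T powr r" unfolding T_def
    using assms by (intro powr_mono2) (auto simp: abs_triangle_ineq4)
  then show "\<bar>a - b\<bar> powr r \<le> 4 * (\<bar>a\<bar> powr r + \<bar>b\<bar> powr r)" using T by simp
qed

lemma amgm: fixes X Y l :: real assumes "0 \<le> X" "0 \<le> Y" "0 < l"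
  shows "sqrt X * sqrt Y \<le> (l * X + Y / l) / 2"
proof -
  define u where "u = sqrt X"
  define v where "v = sqrt Y"
  have X: "X = u^2" and Y: "Y = v^2" using assms by (simp_all add: u_def v_def)
  have "0 \<le> (l * u - v)^2 / l" using assms by simp
  then have "0 \<le> (l * u^2 + v^2 / l) - 2 * (u * v)"
    using assms by (simp add: power2_eq_square field_simps)
  moreover have "0 \<le> u" "0 \<le> v" using assms by (simp_all add: u_def v_def)
  ultimately show ?thesis unfolding X Y u_def[symmetric] v_def[symmetric] using X Y by simp
qed

lemma mm_amgm: fixes r a b l :: real assumes "0 < r" "r \<le> 2" "0 < l"
  shows "mm r a b \<le> (l * (4 * (\<bar>a\<bar> powr r + \<bar>b\<bar> powr r)) + \<bar>a - b\<bar> powr r / l) / 2"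
proof -
  have "mm r a b = sqrt ((\<bar>a\<bar> + \<bar>b\<bar>) powr r) * sqrt (\<bar>a - b\<bar> powr r)"
    unfolding mm_def by (simp add: powr_half_sqrt_powr)
  also have "\<dots> \<le> (l * (\<bar>a\<bar> + \<bar>b\<bar>) powr r + \<bar>a - b\<bar> powr r / l) / 2"
    using assms by (intro amgm) auto
  also have "(\<bar>a\<bar> + \<bar>b\<bar>) powr r \<le> 4 * (\<bar>a\<bar> powr r + \<bar>b\<bar> powr r)"
    using mm_le(2)[OF assms(1,2), of "\<bar>a\<bar>" "- \<bar>b\<bar>"] by simp
  then have "(l * (\<bar>a\<bar> + \<bar>b\<bar>) powr r + \<bar>a - b\<bar> powr r / l) / 2 \<le>
     (l * (4 * (\<bar>a\<bar> powr r + \<bar>b\<bar> powr r)) + \<bar>a - b\<bar> powr r / l) / 2"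
    using assms by (intro divide_right_mono add_right_mono mult_left_mono) auto
  finally show ?thesis .
qed

lemma inf_lemma: fixes I S D :: real assumes "0 \<le> S" "0 \<le> D"
  and H: "\<And>l. 0 < l \<Longrightarrow> I \<le> (l * (4 * S) + D / l) / 2"
  shows "I \<le> 2 * sqrt (S * D)"
proof -
  define u where "u = sqrt S"
  define v where "v = sqrt D"
  have u: "0 \<le> u" "S = u^2" and v: "0 \<le> v" "D = v^2" using assms by (simp_all add: u_def v_def)
  have sq: "sqrt (S * D) = u * v" by (simp add: u_def v_def real_sqrt_mult)
  show ?thesis
  proof (cases "u > 0 \<and> v > 0")
    case True
    have "I \<le> ((v / (2*u)) * (4 * u^2) + v^2 / (v / (2*u))) / 2" using H[of "v / (2*u)"] True u v by simp
    also have "\<dots> = 2 * (u * v)" using True by (simp add: field_simps power2_eq_square)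
    finally show ?thesis by (simp add: sq)
  next
    case False
    show ?thesis
    proof (rule ccontr)
      assume "\<not> ?thesis"
      then have I: "I > 0" "u * v = 0" using False u v by (auto simp: sq)
      show False
      proof (cases "u = 0")
        case True
        have p1: "0 < v^2 + 1" using zero_le_power2[of v] by linarith
        have "0 < (v^2+1)/I" using p1 I by simp
        from H[OF this] have "I \<le> (((v^2+1)/I) * 0 + v^2 / ((v^2+1)/I)) / 2"
          using u v True by simp
        also have "\<dots> = I * (v^2 / (v^2 + 1)) / 2" using I by (simp add: field_simps)
        also have "\<dots> < I"
        proof -
          have "v^2 / (v^2 + 1) < 2" using p1 by (simp add: divide_less_eq)
          then have "I * (v^2 / (v^2 + 1)) < I * 2" using I by (intro mult_strict_left_mono) auto
          then have "I * (v^2 / (v^2 + 1)) / 2 < I * 2 / 2" by (rule divide_strict_right_mono) simp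
          then show ?thesis by simp
        qed
        finally show False by simp
      next
        case False
        then have "u > 0" "v = 0" using u I by auto
        then have "I \<le> ((I / (4 * u^2)) * (4 * u^2) + 0) / 2"
          using H[of "I / (4 * u^2)"] I u v by simp
        also have "\<dots> = I / 2" using \<open>u > 0\<close> by simp
        finally show False using I by simp
      qed
    qed
  qed
qed

lemma Lp_facts: fixes \<phi> \<psi> :: "'a::euclidean_space \<Rightarrow> real"
  assumes pm: "\<phi> \<in> borel_measurable lebesgue" and qm: "\<psi> \<in> borel_measurable lebesgue"
    and pi: "integrable lebesgue (\<lambda>x. \<bar>\<phi> x\<bar> powr r)" and qi: "integrable lebesgue (\<lambda>x. \<bar>\<psi> x\<bar> powr r)"
    and r: "0 < r" "r \<le> 2"
  shows "integrable lebesgue (\<lambda>x. mm r (\<phi> x) (\<psi> x))"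
    "integrable lebesgue (\<lambda>x. \<bar>\<phi> x - \<psi> x\<bar> powr r)"
    "(LINT x|lebesgue. mm r (\<phi> x) (\<psi> x)) \<le> 2 * H_dist r \<phi> \<psi>"
proof -
  note [measurable] = pm qm
  have Is: "integrable lebesgue (\<lambda>x. 4 * (\<bar>\<phi> x\<bar> powr r + \<bar>\<psi> x\<bar> powr r))"
    by (rule Bochner_Integration.integrable_mult_right, rule Bochner_Integration.integrable_add[OF pi qi])
  have mmm: "(\<lambda>x. mm r (\<phi> x) (\<psi> x)) \<in> borel_measurable lebesgue" unfolding mm_def by measurable
  have dm: "(\<lambda>x. \<bar>\<phi> x - \<psi> x\<bar> powr r) \<in> borel_measurable lebesgue" by measurable
  have mm0: "0 \<le> mm r a b" for a b unfolding mm_def by simp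
  show Im: "integrable lebesgue (\<lambda>x. mm r (\<phi> x) (\<psi> x))"
    by (rule Bochner_Integration.integrable_bound[OF Is mmm], rule AE_I2)
       (use mm_le(1)[OF r] mm0 in \<open>auto simp: real_norm_def\<close>)
  show Id: "integrable lebesgue (\<lambda>x. \<bar>\<phi> x - \<psi> x\<bar> powr r)"
    by (rule Bochner_Integration.integrable_bound[OF Is dm], rule AE_I2)
       (use mm_le(2)[OF r] in \<open>auto simp: real_norm_def\<close>)
  define S where "S = Lp_norm_pow r \<phi> + Lp_norm_pow r \<psi>"
  define D where "D = Lp_norm_pow r (\<lambda>x. \<phi> x - \<psi> x)"
  have S0: "0 \<le> S" unfolding S_def Lp_norm_pow_def
    by (intro add_nonneg_nonneg integral_nonneg_AE) auto
  have D0: "0 \<le> D" unfolding D_def Lp_norm_pow_def by (intro integral_nonneg_AE) auto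
  have "(LINT x|lebesgue. mm r (\<phi> x) (\<psi> x)) \<le> 2 * sqrt (S * D)"
  proof (rule inf_lemma[OF S0 D0])
    fix l :: real assume l: "0 < l"
    have IR: "integrable lebesgue (\<lambda>x. (l * (4 * (\<bar>\<phi> x\<bar> powr r + \<bar>\<psi> x\<bar> powr r)) + \<bar>\<phi> x - \<psi> x\<bar> powr r / l) / 2)"
      using Is Id pi qi by (intro Bochner_Integration.integrable_divide Bochner_Integration.integrable_add
          Bochner_Integration.integrable_mult_right) auto
    have "(LINT x|lebesgue. mm r (\<phi> x) (\<psi> x)) \<le>
      (LINT x|lebesgue. (l * (4 * (\<bar>\<phi> x\<bar> powr r + \<bar>\<psi> x\<bar> powr r)) + \<bar>\<phi> x - \<psi> x\<bar> powr r / l) / 2)"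
      by (rule integral_mono[OF Im IR]) (rule mm_amgm[OF r l])
    also have "\<dots> = (l * (4 * S) + D / l) / 2"
      using pi qi Id unfolding S_def D_def Lp_norm_pow_def by simp
    finally show "(LINT x|lebesgue. mm r (\<phi> x) (\<psi> x)) \<le> (l * (4 * S) + D / l) / 2" .
  qed
  then show "(LINT x|lebesgue. mm r (\<phi> x) (\<psi> x)) \<le> 2 * H_dist r \<phi> \<psi>"
    unfolding H_dist_def S_def D_def .
qed

context gsetup
begin

lemma Gint: fixes \<phi> :: "'a::euclidean_space \<Rightarrow> real"
  assumes "\<phi> \<in> Lp_space r1 \<inter> Lp_space r2"
  shows "integrable lebesgue (\<lambda>x. levy_exponent V (\<phi> x))"
proof -
  from assms have pm: "\<phi> \<in> borel_measurable lebesgue"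
    and I1: "integrable lebesgue (\<lambda>x. \<bar>\<phi> x\<bar> powr r1)" and I2: "integrable lebesgue (\<lambda>x. \<bar>\<phi> x\<bar> powr r2)"
    by (auto simp: Lp_space_def)
  have m: "(\<lambda>x. levy_exponent V (\<phi> x)) \<in> borel_measurable lebesgue"
    by (rule measurable_compose[OF pm borel_measurable_continuous_onI[OF gcont]])
  have I: "integrable lebesgue (\<lambda>x. 4 * (W2 * \<bar>\<phi> x\<bar> powr r2 + W1 * \<bar>\<phi> x\<bar> powr r1))"
    by (rule Bochner_Integration.integrable_mult_right, rule Bochner_Integration.integrable_add;
        rule Bochner_Integration.integrable_mult_right; rule I1 I2)
  show ?thesis
    by (rule Bochner_Integration.integrable_bound[OF I m], rule AE_I2)
       (unfold real_norm_def, rule order.trans[OF gbound abs_ge_self])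
qed

lemma Gdiff: fixes \<phi> \<psi> :: "'a::euclidean_space \<Rightarrow> real"
  assumes p: "\<phi> \<in> Lp_space r1 \<inter> Lp_space r2" and q: "\<psi> \<in> Lp_space r1 \<inter> Lp_space r2"
  shows "cmod (G_functional V \<phi> - G_functional V \<psi>) \<le> (8 * W1) * H_dist r1 \<phi> \<psi> + (8 * W2) * H_dist r2 \<phi> \<psi>"
proof -
  from p q have pm: "\<phi> \<in> borel_measurable lebesgue" and qm: "\<psi> \<in> borel_measurable lebesgue"
    and p1: "integrable lebesgue (\<lambda>x. \<bar>\<phi> x\<bar> powr r1)" and p2: "integrable lebesgue (\<lambda>x. \<bar>\<phi> x\<bar> powr r2)"
    and q1: "integrable lebesgue (\<lambda>x. \<bar>\<psi> x\<bar> powr r1)" and q2: "integrable lebesgue (\<lambda>x. \<bar>\<psi> x\<bar> powr r2)"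
    by (auto simp: Lp_space_def)
  have r1': "0 < r1" "r1 \<le> 2" and r2': "0 < r2" "r2 \<le> 2" using r by auto
  note F1 = Lp_facts[OF pm qm p1 q1 r1'] and F2 = Lp_facts[OF pm qm p2 q2 r2']
  have IB: "integrable lebesgue (\<lambda>x. 4 * (W2 * mm r2 (\<phi> x) (\<psi> x) + W1 * mm r1 (\<phi> x) (\<psi> x)))"
    by (rule Bochner_Integration.integrable_mult_right, rule Bochner_Integration.integrable_add;
        rule Bochner_Integration.integrable_mult_right; rule F1(1) F2(1))
  have "G_functional V \<phi> - G_functional V \<psi> = (LINT x|lebesgue. levy_exponent V (\<phi> x) - levy_exponent V (\<psi> x))"
    unfolding G_functional_def using Gint[OF p] Gint[OF q] by simp
  also have "cmod \<dots> \<le> (LINT x|lebesgue. 4 * (W2 * mm r2 (\<phi> x) (\<psi> x) + W1 * mm r1 (\<phi> x) (\<psi> x)))"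
    by (rule Bochner_Integration.integral_norm_bound_integral[OF
          Bochner_Integration.integrable_diff[OF Gint[OF p] Gint[OF q]] IB]) (rule gdiff)
  also have "\<dots> = 4 * (W2 * (LINT x|lebesgue. mm r2 (\<phi> x) (\<psi> x)) + W1 * (LINT x|lebesgue. mm r1 (\<phi> x) (\<psi> x)))"
    using F1(1) F2(1) by simp
  also have "\<dots> \<le> 4 * (W2 * (2 * H_dist r2 \<phi> \<psi>) + W1 * (2 * H_dist r1 \<phi> \<psi>))"
    using F1(3) F2(3) W_nonneg by (intro mult_left_mono add_mono) auto
  finally show ?thesis by (simp add: algebra_simps)
qed

end

theorem lemma3p14:
  fixes V :: "real measure" and p q :: real
  defines "A \<equiv> {p, q} \<union> (if symmetric_measure V then {} else {1})"
  assumes "levy_measure V"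
    and "0 < p" and "p \<le> q" and "q \<le> 2"
    and "V \<in> M_class (Min A) (Max A)"
  shows "(\<forall>\<phi> \<in> (Lp_space (Min A) \<inter> Lp_space (Max A) :: ('a::euclidean_space \<Rightarrow> real) set).
            integrable lebesgue (\<lambda>x. levy_exponent V (\<phi> x)))
       \<and> (\<exists>\<kappa>1 \<kappa>2. \<kappa>1 \<ge> 0 \<and> \<kappa>2 \<ge> 0 \<and>
            (\<forall>\<phi> \<in> (Lp_space (Min A) \<inter> Lp_space (Max A) :: ('a \<Rightarrow> real) set).
             \<forall>\<psi> \<in> Lp_space (Min A) \<inter> Lp_space (Max A).
               cmod (G_functional V \<phi> - G_functional V \<psi>)
                 \<le> \<kappa>1 * H_dist (Min A) \<phi> \<psi> + \<kappa>2 * H_dist (Max A) \<phi> \<psi>))"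
proof -
  have fin: "finite A" "A \<noteq> {}" unfolding A_def by auto
  have pA: "p \<in> A" "q \<in> A" unfolding A_def by auto
  have allpos: "\<forall>a\<in>A. 0 < a" unfolding A_def using assms by auto
  have alle: "\<forall>a\<in>A. a \<le> 2" unfolding A_def using assms by auto
  have r1pos: "0 < Min A" using fin allpos by simp
  have r12: "Min A \<le> Max A" using Min_le[OF fin(1) pA(1)] Max_ge[OF fin(1) pA(1)] by linarith
  have r2le: "Max A \<le> 2" using fin alle by simp
  have cs: "(\<forall>B \<in> sets borel. emeasure V B = emeasure V (uminus ` B)) \<or> (Min A \<le> 1 \<and> 1 \<le> Max A)"
  proof (cases "symmetric_measure V")
    case True then show ?thesis unfolding symmetric_measure_def by simp
  next
    case False
    then have "1 \<in> A" unfolding A_def by simp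
    then show ?thesis using Min_le[OF fin(1)] Max_ge[OF fin(1)] by blast
  qed
  have sV: "sets V = sets borel" using \<open>levy_measure V\<close> unfolding levy_measure_def radon_punctured_def by simp
  have mc: "(\<integral>\<^sup>+ a. ennreal (indicator {a. 0 < \<bar>a\<bar> \<and> \<bar>a\<bar> < 1} a * \<bar>a\<bar> powr Max A) \<partial>V) < \<infinity>"
     "(\<integral>\<^sup>+ a. ennreal (indicator {a. 1 \<le> \<bar>a\<bar>} a * \<bar>a\<bar> powr Min A) \<partial>V) < \<infinity>"
    using \<open>V \<in> M_class (Min A) (Max A)\<close> unfolding M_class_def by auto
  have S1: "{a::real. \<bar>a\<bar> < 1} \<in> sets borel" by (intro borel_open open_Collect_less continuous_intros)
  have S2: "{a::real. 1 \<le> \<bar>a\<bar>} \<in> sets borel" by (intro borel_closed closed_Collect_le continuous_intros)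
  have i2: "integrable V (\<lambda>a. indicator {a. \<bar>a\<bar> < 1} a * \<bar>a\<bar> powr Max A)"
  proof (rule integrableI_bounded)
    show "(\<lambda>a. indicator {a. \<bar>a\<bar> < 1} a * \<bar>a\<bar> powr Max A) \<in> borel_measurable V"
      unfolding measurable_cong_sets[OF sV refl] using S1 by measurable
    have "(\<integral>\<^sup>+ a. ennreal (norm (indicator {a. \<bar>a\<bar> < 1} a * \<bar>a\<bar> powr Max A)) \<partial>V)
        = (\<integral>\<^sup>+ a. ennreal (indicator {a. 0 < \<bar>a\<bar> \<and> \<bar>a\<bar> < 1} a * \<bar>a\<bar> powr Max A) \<partial>V)"
      by (rule nn_integral_cong) (auto simp: indicator_def)
    then show "(\<integral>\<^sup>+ a. ennreal (norm (indicator {a. \<bar>a\<bar> < 1} a * \<bar>a\<bar> powr Max A)) \<partial>V) < \<infinity>"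
      using mc(1) by simp
  qed
  have i1: "integrable V (\<lambda>a. indicator {a. 1 \<le> \<bar>a\<bar>} a * \<bar>a\<bar> powr Min A)"
  proof (rule integrableI_bounded)
    show "(\<lambda>a. indicator {a. 1 \<le> \<bar>a\<bar>} a * \<bar>a\<bar> powr Min A) \<in> borel_measurable V"
      unfolding measurable_cong_sets[OF sV refl] using S2 by measurable
    have "(\<integral>\<^sup>+ a. ennreal (norm (indicator {a. 1 \<le> \<bar>a\<bar>} a * \<bar>a\<bar> powr Min A)) \<partial>V)
        = (\<integral>\<^sup>+ a. ennreal (indicator {a. 1 \<le> \<bar>a\<bar>} a * \<bar>a\<bar> powr Min A) \<partial>V)"
      by (rule nn_integral_cong) (auto simp: indicator_def)
    then show "(\<integral>\<^sup>+ a. ennreal (norm (indicator {a. 1 \<le> \<bar>a\<bar>} a * \<bar>a\<bar> powr Min A)) \<partial>V) < \<infinity>"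
      using mc(2) by simp
  qed
  interpret G: gsetup V "Min A" "Max A"
    by (rule gsetup.intro[OF sV i2 i1 r1pos r12 r2le cs])
  have P1: "\<forall>\<phi> \<in> (Lp_space (Min A) \<inter> Lp_space (Max A) :: ('a::euclidean_space \<Rightarrow> real) set).
            integrable lebesgue (\<lambda>x. levy_exponent V (\<phi> x))"
    using G.Gint by blast
  have P2: "\<forall>\<phi> \<in> (Lp_space (Min A) \<inter> Lp_space (Max A) :: ('a \<Rightarrow> real) set).
             \<forall>\<psi> \<in> Lp_space (Min A) \<inter> Lp_space (Max A).
               cmod (G_functional V \<phi> - G_functional V \<psi>)
                 \<le> (8 * G.W1) * H_dist (Min A) \<phi> \<psi> + (8 * G.W2) * H_dist (Max A) \<phi> \<psi>"
    using G.Gdiff by blast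
  have P3: "8 * G.W1 \<ge> 0" "8 * G.W2 \<ge> 0" using G.W_nonneg by auto
  show ?thesis using P1 P2 P3 by blast
qed

end
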